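(* For all $N\subseteq\mathbf{U}$, $w\in\mathbb{W}(N)$, $j\in N$, and $T\subseteq N\setminus\{j\}$ such that $j$ is a null player in $w$, we have $\mathrm{MPW}_j(w^{r^\star}_{-T})=0$.
   Context: $\mathbf{U}$ is a finite set of players; cardinalities of $N,S,B$ are $n,s,b$. $\Pi(N)$ is the set of partitions of $N$ ($\Pi(\emptyset)=\{\emptyset\}$). $p^\star$ is the Ewens distribution $p^\star_N(\pi)=\frac{\prod_{B\in\pi}(b-1)!}{n!}$. $\pi_{+i\leadsto B}=(\pi\setminus\{B\})\cup\{B\cup\{i\}\}$ for $B\in\pi$, $\pi_{+i\leadsto\emptyset}=\pi\cup\{\{i\}\}$. Embedded coalitions $\mathcal{E}(N)=\{(S,\pi):S\subseteq N,\pi\in\Pi(N\setminus S)\}$; a TUX game on $N$ is $w:\mathcal{E}(N)\to\mathbb{R}$ with $w(\emptyset,\pi)=0$; $\mathbb{W}(N)$ their set. The restriction operator $r^\star$ maps $w\in\mathbb{W}(N)$, $i\in N$ to $w^{r^\star}_{-i}\in\mathbb{W}(N\setminus\{i\})$, $w^{r^\star}_{-i}(S,\pi)=\frac{1}{n-s}w(S,\pi_{+i\leadsto\emptyset})+\sum_{B\in\pi}\frac{b}{n-s}w(S,\pi_{+i\leadsto B})$ for $(S,\pi)\in\mathcal{E}(N\setminus\{i\})$; it is path independent ($(w^{r^\star}_{-i})^{r^\star}_{-k}=(w^{r^\star}_{-k})^{r^\star}_{-i}$), so $w^{r^\star}_{-T}$ (removing the players of $T$ successively, in any order) is well defined, with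 $w^{r^\star}_{-\emptyset}=w$. Player $j$ is a null player in $w$ if $w(S\cup\{j\},\pi)=w(S,\pi_{+j\leadsto B})$ for all $(S,\pi)\in\mathcal{E}(N\setminus\{j\})$, $B\in\pi\cup\{\emptyset\}$. The Shapley value of a TU game $v$ is $\mathrm{Sh}_i(v)=\sum_{S\subseteq N\setminus\{i\}}\frac{s!(n-s-1)!}{n!}(v(S\cup\{i\})-v(S))$; the MPW solution is $\mathrm{MPW}(w)=\mathrm{Sh}(\bar v^\star_w)$ with $\bar v^\star_w(S)=\sum_{\pi\in\Pi(N\setminus S)}p^\star_{N\setminus S}(\pi)w(S,\pi)$. *)

theory Defs
  imports Complex_Main "HOL-Library.Disjoint_Sets"
begin

definition partitions :: "'a set \<Rightarrow> 'a set set set" where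
  "partitions N = {P. partition_on N P}"

text \<open>A TUX game is a function on pairs (S, pi); only its values on embedded coalitions
  of N matter.\<close>
type_synonym 'a tux = "'a set \<Rightarrow> 'a set set \<Rightarrow> real"

definition embedded :: "'a set \<Rightarrow> ('a set \<times> 'a set set) set" where
  "embedded N = {(S, P). S \<subseteq> N \<and> P \<in> partitions (N - S)}"

definition tux_game :: "'a set \<Rightarrow> 'a tux \<Rightarrow> bool" where
  "tux_game N w \<longleftrightarrow> (\<forall>P \<in> partitions N. w {} P = 0)"

definition add_to :: "'a set set \<Rightarrow> 'a \<Rightarrow> 'a set \<Rightarrow> 'a set set" where
  "add_to P i B = (if B = {} then insert {i} P else insert (insert i B) (P - {B}))"

definition restr :: "'a set \<Rightarrow> 'a tux \<Rightarrow> 'a \<Rightarrow> 'a tux" where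
  "restr N w i = (\<lambda>S P.
     w S (add_to P i {}) / real (card N - card S)
     + (\<Sum>B\<in>P. real (card B) / real (card N - card S) * w S (add_to P i B)))"

fun restr_list :: "'a set \<Rightarrow> 'a tux \<Rightarrow> 'a list \<Rightarrow> 'a tux" where
  "restr_list N w [] = w"
| "restr_list N w (i # is) = restr_list (N - {i}) (restr N w i) is"

definition null_player :: "'a set \<Rightarrow> 'a tux \<Rightarrow> 'a \<Rightarrow> bool" where
  "null_player N w j \<longleftrightarrow>
     (\<forall>(S, P) \<in> embedded (N - {j}). \<forall>B \<in> P \<union> {{}}. w (insert j S) P = w S (add_to P j B))"

definition ewens :: "'a set \<Rightarrow> 'a set set \<Rightarrow> real" where
  "ewens N P = (\<Prod>B\<in>P. fact (card B - 1)) / fact (card N)"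

definition shapley :: "'a set \<Rightarrow> ('a set \<Rightarrow> real) \<Rightarrow> 'a \<Rightarrow> real" where
  "shapley N v i = (\<Sum>S \<in> Pow (N - {i}).
      fact (card S) * fact (card N - card S - 1) / fact (card N) * (v (insert i S) - v S))"

definition avg_game :: "'a set \<Rightarrow> 'a tux \<Rightarrow> 'a set \<Rightarrow> real" where
  "avg_game N w S = (\<Sum>P \<in> partitions (N - S). ewens (N - S) P * w S P)"

definition MPW :: "'a set \<Rightarrow> 'a tux \<Rightarrow> 'a \<Rightarrow> real" where
  "MPW N w = shapley N (avg_game N w)"

end

theory Submission
  imports Defs
begin

lemma part_add_empty:
  assumes "partition_on X P" "i \<notin> X"
  shows "partition_on (insert i X) (add_to P i {})"
  using assms unfolding add_to_def partition_on_def disjoint_def by auto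

lemma part_add_B:
  assumes "partition_on X P" "i \<notin> X" "B \<in> P"
  shows "partition_on (insert i X) (add_to P i B)"
proof -
  have "B \<noteq> {}" using assms partition_onD3 by metis
  then show ?thesis
  using assms unfolding add_to_def partition_on_def disjoint_def by (auto; blast)
qed

definition blk :: "'a set set \<Rightarrow> 'a \<Rightarrow> 'a set" where
  "blk Q i = (THE C. C \<in> Q \<and> i \<in> C)"

lemma blk_eq:
  assumes "partition_on A Q" "C \<in> Q" "i \<in> C"
  shows "blk Q i = C"
  unfolding blk_def
proof (rule the_equality)
  show "C \<in> Q \<and> i \<in> C" using assms by simp
  fix D assume "D \<in> Q \<and> i \<in> D"
  then show "D = C" using assms unfolding partition_on_def disjoint_def by blast
qed

definition unadd :: "'a set set \<Rightarrow> 'a \<Rightarrow> 'a set set \<times> 'a set" where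
  "unadd Q i = (let C = blk Q i; B = C - {i} in
     (if B = {} then Q - {C} else insert B (Q - {C}), B))"

lemma unadd_add:
  assumes "partition_on X P" "i \<notin> X" "B \<in> insert {} P"
  shows "unadd (add_to P i B) i = (P, B)"
proof (cases "B = {}")
  case True
  have p: "partition_on (insert i X) (add_to P i B)" using part_add_empty assms True by metis
  have "blk (add_to P i B) i = {i}"
    by (rule blk_eq[OF p]) (auto simp: add_to_def True)
  moreover have "{i} \<notin> P" using assms partition_onD1 by blast
  ultimately show ?thesis using True by (simp add: unadd_def add_to_def)
next
  case False
  then have B: "B \<in> P" using assms by auto
  have p: "partition_on (insert i X) (add_to P i B)" using part_add_B assms B by metis
  have "blk (add_to P i B) i = insert i B"
    by (rule blk_eq[OF p]) (auto simp: add_to_def False)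
  moreover have "insert i B \<notin> P" using assms partition_onD1 by blast
  moreover have "i \<notin> B" using assms B partition_onD1 by blast
  ultimately show ?thesis using False B by (auto simp: unadd_def add_to_def Let_def)
qed


lemma l7: assumes un: "\<Union>Q = insert i X" and C: "C \<in> Q" "i \<in> C" and disj: "\<And>D. D \<in> Q \<Longrightarrow> D \<noteq> C \<Longrightarrow> D \<inter> C = {}"
  and "i \<notin> X" shows "\<Union>(Q - {C}) \<subseteq> X"
proof
  fix x assume "x \<in> \<Union>(Q - {C})"
  then obtain D where D: "D \<in> Q" "D \<noteq> C" "x \<in> D" by blast
  then have "x \<noteq> i" using disj C by blast
  moreover have "x \<in> insert i X" using D un by blast
  ultimately show "x \<in> X" by simp
qed
lemma l8: assumes un: "\<Union>Q = insert i X" and C: "C \<in> Q" "C = {i}" 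
  and "i \<notin> X" shows "X \<subseteq> \<Union>(Q - {C})"
proof
  fix x assume "x \<in> X"
  then have "x \<in> \<Union>Q" using un by blast
  then obtain D where D: "D \<in> Q" "x \<in> D" by blast
  then have "D \<noteq> C" using C \<open>x \<in> X\<close> assms(4) by auto
  then show "x \<in> \<Union>(Q - {C})" using D by blast
qed

lemma l15: assumes un: "\<Union>Q = insert i X" and C: "C \<in> Q" "i \<in> C" and disj: "\<And>D. D \<in> Q \<Longrightarrow> D \<noteq> C \<Longrightarrow> D \<inter> C = {}"
  and "i \<notin> X" shows "\<Union>(insert (C - {i}) (Q - {C})) \<subseteq> X"
proof -
  have "\<Union>(Q - {C}) \<subseteq> X" by (rule l7[OF assms])
  moreover have "C \<subseteq> insert i X" using un C by blast
  ultimately show ?thesis by auto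
qed
lemma l16: assumes un: "\<Union>Q = insert i X" 
  and "i \<notin> X" shows "X \<subseteq> \<Union>(insert (C - {i}) (Q - {C}))"
proof
  fix x assume "x \<in> X"
  then have "x \<in> \<Union>Q" using un by blast
  then obtain D where D: "D \<in> Q" "x \<in> D" by blast
  show "x \<in> \<Union>(insert (C - {i}) (Q - {C}))"
  proof (cases "D = C")
    case True
    then have "x \<in> C - {i}" using D \<open>x \<in> X\<close> assms(2) by auto
    then show ?thesis by blast
  next
    case False
    then show ?thesis using D by blast
  qed
qed
lemma ldisj: assumes dQ0: "disjoint Q"
  and C: "C \<in> Q"
  and a: "a \<in> insert (C - {i}) (Q - {C})" and b: "b \<in> insert (C - {i}) (Q - {C})" and ab: "a \<noteq> b"
  shows "a \<inter> b = {}"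
proof -
  have dQ: "\<And>a b. a \<in> Q \<Longrightarrow> b \<in> Q \<Longrightarrow> a \<noteq> b \<Longrightarrow> a \<inter> b = {}"
    using dQ0 unfolding disjoint_def by blast
  show ?thesis
proof (cases "a = C - {i}")
  case True
  then have "b \<in> Q" "b \<noteq> C" using b ab by auto
  then have "b \<inter> C = {}" using dQ C by blast
  then show ?thesis using True by blast
next
  case F: False
  then have a': "a \<in> Q" "a \<noteq> C" using a by auto
  show ?thesis
  proof (cases "b = C - {i}")
    case True
    have "a \<inter> C = {}" using dQ C a' by blast
    then show ?thesis using True by blast
  next
    case False
    then have "b \<in> Q" using b by auto
    then show ?thesis using dQ a' ab by blast
  qed
qed
qed

lemma unadd_props:
  assumes "partition_on (insert i X) Q" "i \<notin> X"
  shows "fst (unadd Q i) \<in> partitions X \<and> snd (unadd Q i) \<in> insert {} (fst (unadd Q i))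
     \<and> add_to (fst (unadd Q i)) i (snd (unadd Q i)) = Q"
proof -
  obtain C where C: "C \<in> Q" "i \<in> C" using assms(1) partition_onD1 by blast
  have bc: "blk Q i = C" using blk_eq[OF assms(1) C] .
  have disj: "\<And>D. D \<in> Q \<Longrightarrow> D \<noteq> C \<Longrightarrow> D \<inter> C = {}" using assms(1) C
    unfolding partition_on_def disjoint_def by blast
  have ne: "{} \<notin> Q" using assms(1) partition_onD3 by blast
  have un: "\<Union>Q = insert i X" using assms(1) partition_onD1 by blast
  show ?thesis
  proof (cases "C - {i} = {}")
    case True
    then have Ci: "C = {i}" using C by auto
    have dQ: "\<And>a b. a \<in> Q \<Longrightarrow> b \<in> Q \<Longrightarrow> a \<noteq> b \<Longrightarrow> a \<inter> b = {}"
      using assms(1) unfolding partition_on_def disjoint_def by blast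
    have "partition_on X (Q - {C})"
    proof (unfold partition_on_def disjoint_def, intro conjI ballI impI)
      show "\<Union>(Q - {C}) = X"
      proof
        show "\<Union>(Q - {C}) \<subseteq> X" by (rule l7[OF un C disj assms(2)])
        show "X \<subseteq> \<Union>(Q - {C})" by (rule l8[OF un C(1) Ci assms(2)])
      qed
      show "{} \<notin> Q - {C}" using ne by auto
      fix a b assume "a \<in> Q - {C}" "b \<in> Q - {C}" "a \<noteq> b"
      then show "a \<inter> b = {}" using dQ by auto
    qed
    moreover have u: "unadd Q i = (Q - {C}, {})" using bc True by (simp add: unadd_def Let_def)
    moreover have "add_to (Q - {C}) i {} = Q" using C Ci by (simp add: add_to_def insert_absorb)
    ultimately show ?thesis by (simp add: partitions_def)
  next
    case False
    have nin: "C - {i} \<notin> Q - {C}"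
    proof
      assume "C - {i} \<in> Q - {C}"
      then have "(C - {i}) \<inter> C = {}" using disj by blast
      then show False using False by blast
    qed
    have "partition_on X (insert (C - {i}) (Q - {C}))"
    proof (unfold partition_on_def disjoint_def, intro conjI ballI impI)
      show "\<Union>(insert (C - {i}) (Q - {C})) = X"
      proof
        show "\<Union>(insert (C - {i}) (Q - {C})) \<subseteq> X" by (rule l15[OF un C disj assms(2)])
        show "X \<subseteq> \<Union>(insert (C - {i}) (Q - {C}))" by (rule l16[OF un assms(2)])
      qed
      show "{} \<notin> insert (C - {i}) (Q - {C})" using ne False by auto
      fix a b assume "a \<in> insert (C - {i}) (Q - {C})" "b \<in> insert (C - {i}) (Q - {C})" "a \<noteq> b"
      show "a \<inter> b = {}" by (rule ldisj[OF partition_onD2[OF assms(1)] C(1)]) fact+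
    qed
    moreover have "add_to (insert (C - {i}) (Q - {C})) i (C - {i}) = Q"
    proof -
      have "insert (C - {i}) (Q - {C}) - {C - {i}} = Q - {C}" using nin by auto
      moreover have "insert i (C - {i}) = C" using C by auto
      ultimately show ?thesis using False C by (simp add: add_to_def insert_absorb)
    qed
    moreover have u: "unadd Q i = (insert (C - {i}) (Q - {C}), C - {i})" using bc False by (simp add: unadd_def Let_def)
    ultimately show ?thesis by (simp add: partitions_def)
  qed
qed


lemma bij_add:
  assumes "i \<notin> X"
  shows "bij_betw (\<lambda>(P,B). add_to P i B) (SIGMA P:partitions X. insert {} P) (partitions (insert i X))"
proof (rule bij_betw_byWitness[where f'="\<lambda>Q. unadd Q i"])
  show "\<forall>a\<in>SIGMA P:partitions X. insert {} P. unadd ((\<lambda>(P,B). add_to P i B) a) i = a"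
  proof
    fix a assume "a \<in> (SIGMA P:partitions X. insert {} P)"
    then obtain P B where "a = (P, B)" "partition_on X P" "B \<in> insert {} P"
      by (auto simp: partitions_def)
    then show "unadd ((\<lambda>(P,B). add_to P i B) a) i = a" using unadd_add[OF _ assms] by simp
  qed
  show "\<forall>a'\<in>partitions (insert i X). (\<lambda>(P,B). add_to P i B) (unadd a' i) = a'"
  proof
    fix Q assume "Q \<in> partitions (insert i X)"
    then have "partition_on (insert i X) Q" by (simp add: partitions_def)
    then show "(\<lambda>(P,B). add_to P i B) (unadd Q i) = Q"
      using unadd_props[of i X Q] assms by (simp add: case_prod_beta)
  qed
  show "(\<lambda>(P,B). add_to P i B) ` (SIGMA P:partitions X. insert {} P) \<subseteq> partitions (insert i X)"
    using part_add_B part_add_empty assms by (auto simp: partitions_def)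
  show "(\<lambda>Q. unadd Q i) ` partitions (insert i X) \<subseteq> (SIGMA P:partitions X. insert {} P)"
  proof
    fix x assume "x \<in> (\<lambda>Q. unadd Q i) ` partitions (insert i X)"
    then obtain Q where Q: "Q \<in> partitions (insert i X)" "x = unadd Q i" by blast
    then have "partition_on (insert i X) Q" by (simp add: partitions_def)
    then have "fst x \<in> partitions X \<and> snd x \<in> insert {} (fst x)"
      using unadd_props[of i X Q] assms Q(2) by simp
    then show "x \<in> (SIGMA P:partitions X. insert {} P)" by (cases x) auto
  qed
qed

lemma ewens_empty:
  assumes "finite X" "i \<notin> X" "partition_on X P"
  shows "ewens (insert i X) (add_to P i {}) = ewens X P / (real (card X) + 1)"
proof -
  have fP: "finite P" using finite_elements assms by blast
  have "{i} \<notin> P" using assms partition_onD1 by blast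
  then have "(\<Prod>B\<in>add_to P i {}. fact (card B - 1) :: real) = (\<Prod>B\<in>P. fact (card B - 1))"
    using fP by (simp add: add_to_def)
  moreover have "fact (card (insert i X)) = (real (card X) + 1) * (fact (card X) :: real)"
    using assms by (simp add: fact_Suc)
  ultimately show ?thesis by (simp add: ewens_def)
qed

lemma ewens_B:
  assumes "finite X" "i \<notin> X" "partition_on X P" "B \<in> P"
  shows "ewens (insert i X) (add_to P i B) = ewens X P * real (card B) / (real (card X) + 1)"
proof -
  have fP: "finite P" using finite_elements assms by blast
  have "B \<subseteq> X" using Union_upper[OF assms(4)] partition_onD1[OF assms(3)] by simp
  then have fB: "finite B" using assms(1) finite_subset by blast
  have Bne: "B \<noteq> {}" using assms partition_onD3 by metis
  then have cB: "card B \<ge> 1" using fB by (simp add: Suc_le_eq card_gt_0_iff)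
  have iB: "i \<notin> B" using assms partition_onD1 by blast
  have nin: "insert i B \<notin> P - {B}" using assms partition_onD1 by blast
  have e1: "add_to P i B = insert (insert i B) (P - {B})" using Bne by (simp add: add_to_def)
  have "(\<Prod>C\<in>add_to P i B. fact (card C - 1) :: real) = fact (card (insert i B) - 1) * (\<Prod>C\<in>P - {B}. fact (card C - 1))"
    unfolding e1 by (rule prod.insert) (use fP nin in auto)
  also have "card (insert i B) - 1 = card B" using fB iB by simp
  finally have p1: "(\<Prod>C\<in>add_to P i B. fact (card C - 1) :: real) = fact (card B) * (\<Prod>C\<in>P - {B}. fact (card C - 1))" .
  have p2: "(\<Prod>C\<in>P. fact (card C - 1) :: real) = fact (card B - 1) * (\<Prod>C\<in>P - {B}. fact (card C - 1))"
    by (rule prod.remove[OF fP assms(4)])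
  have p3: "fact (card B) = real (card B) * (fact (card B - 1) :: real)"
    by (rule fact_reduce) (use cB in simp)
  have p4: "fact (card (insert i X)) = (real (card X) + 1) * (fact (card X) :: real)"
    using assms by (simp add: fact_Suc)
  show ?thesis unfolding ewens_def p1 p2 p3 p4 by (simp add: ac_simps)
qed

lemma sum_card_part:
  assumes "finite X" "partition_on X P"
  shows "(\<Sum>B\<in>P. real (card B)) = real (card X)"
proof -
  have "card X = card (\<Union>P)" using assms partition_onD1 by metis
  also have "\<dots> = (\<Sum>B\<in>P. card B)"
  proof (rule card_Union_disjoint)
    show "disjoint P" using assms(2) partition_onD2 by blast
    fix A assume "A \<in> P"
    then have "A \<subseteq> X" using assms(2) partition_onD1 by blast
    then show "finite A" using assms(1) finite_subset by blast
  qed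
  finally show ?thesis by simp
qed

lemma key:
  assumes "finite X" "i \<notin> X"
  shows "(\<Sum>Q\<in>partitions (insert i X). ewens (insert i X) Q * f Q)
    = (\<Sum>P\<in>partitions X. ewens X P * (f (add_to P i {}) / (real (card X) + 1)
         + (\<Sum>B\<in>P. real (card B) / (real (card X) + 1) * f (add_to P i B))))"
proof -
  let ?h = "\<lambda>Q. ewens (insert i X) Q * f Q"
  have fin: "finite (partitions X)" using assms finitely_many_partition_on by (simp add: partitions_def)
  have "(\<Sum>Q\<in>partitions (insert i X). ?h Q) = (\<Sum>(P,B)\<in>(SIGMA P:partitions X. insert {} P). ?h (add_to P i B))"
    using sum.reindex_bij_betw[OF bij_add[OF assms(2)], of ?h] by (simp add: case_prod_beta)
  also have "\<dots> = (\<Sum>P\<in>partitions X. \<Sum>B\<in>insert {} P. ?h (add_to P i B))"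
    using fin by (subst sum.Sigma) (auto simp: partitions_def intro: finite_elements[OF assms(1)])
  also have "\<dots> = (\<Sum>P\<in>partitions X. ewens X P * (f (add_to P i {}) / (real (card X) + 1)
         + (\<Sum>B\<in>P. real (card B) / (real (card X) + 1) * f (add_to P i B))))"
  proof (rule sum.cong[OF refl])
    fix P assume "P \<in> partitions X"
    then have P: "partition_on X P" by (simp add: partitions_def)
    have fP: "finite P" using finite_elements assms P by blast
    have "{} \<notin> P" using P partition_onD3 by blast
    then have "(\<Sum>B\<in>insert {} P. ?h (add_to P i B)) = ?h (add_to P i {}) + (\<Sum>B\<in>P. ?h (add_to P i B))"
      using fP by simp
    also have "\<dots> = ewens X P * (f (add_to P i {}) / (real (card X) + 1)
         + (\<Sum>B\<in>P. real (card B) / (real (card X) + 1) * f (add_to P i B)))"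
      using ewens_empty[OF assms P] ewens_B[OF assms P]
      by (simp add: algebra_simps sum_distrib_left)
    finally show "(\<Sum>B\<in>insert {} P. ?h (add_to P i B)) = \<dots>" .
  qed
  finally show ?thesis .
qed


lemma card_minus_S:
  assumes "finite N" "i \<in> N" "S \<subseteq> N - {i}"
  shows "real (card N - card S) = real (card (N - {i} - S)) + 1"
proof -
  have "N - S = insert i (N - {i} - S)" using assms by auto
  then have "card (N - S) = card (N - {i} - S) + 1" using assms(1) by simp
  moreover have "card (N - S) = card N - card S"
    using assms by (intro card_Diff_subset) (auto intro: finite_subset)
  ultimately show ?thesis by simp
qed

lemma avg_restr:
  assumes "finite N" "i \<in> N" "S \<subseteq> N - {i}"
  shows "avg_game (N - {i}) (restr N w i) S = avg_game N w S"
proof -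
  define X where "X = N - {i} - S"
  have NS: "N - S = insert i X" using assms by (auto simp: X_def)
  have iX: "i \<notin> X" "finite X" using assms by (auto simp: X_def)
  have c: "real (card N - card S) = real (card X) + 1" using card_minus_S[OF assms] by (simp add: X_def)
  have "avg_game N w S = (\<Sum>Q\<in>partitions (insert i X). ewens (insert i X) Q * w S Q)"
    by (simp add: avg_game_def NS)
  also have "\<dots> = (\<Sum>P\<in>partitions X. ewens X P * (w S (add_to P i {}) / (real (card X) + 1)
         + (\<Sum>B\<in>P. real (card B) / (real (card X) + 1) * w S (add_to P i B))))"
    by (rule key[OF iX(2) iX(1)])
  also have "\<dots> = avg_game (N - {i}) (restr N w i) S"
    unfolding avg_game_def restr_def c by (simp add: X_def)
  finally show ?thesis by simp
qed

lemma avg_restr_list: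
  "finite N \<Longrightarrow> distinct xs \<Longrightarrow> set xs \<subseteq> N \<Longrightarrow> S \<subseteq> N - set xs \<Longrightarrow>
   avg_game (N - set xs) (restr_list N w xs) S = avg_game N w S"
proof (induction xs arbitrary: N w)
  case Nil
  then show ?case by simp
next
  case (Cons i xs)
  have "avg_game (N - {i} - set xs) (restr_list (N - {i}) (restr N w i) xs) S
        = avg_game (N - {i}) (restr N w i) S"
    using Cons by (intro Cons.IH) auto
  also have "\<dots> = avg_game N w S" using Cons by (intro avg_restr) auto
  finally show ?case by (simp add: Diff_insert2[symmetric] Un_commute set_diff_eq) 
qed

lemma null_avg:
  assumes "finite N" "j \<in> N" "null_player N w j" "S \<subseteq> N - {j}"
  shows "avg_game N w (insert j S) = avg_game N w S"
proof -
  define X where "X = N - {j} - S"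
  have NS: "N - S = insert j X" using assms by (auto simp: X_def)
  have NjS: "N - insert j S = X" by (auto simp: X_def)
  have iX: "j \<notin> X" "finite X" using assms by (auto simp: X_def)
  have "avg_game N w S = (\<Sum>Q\<in>partitions (insert j X). ewens (insert j X) Q * w S Q)"
    by (simp add: avg_game_def NS)
  also have "\<dots> = (\<Sum>P\<in>partitions X. ewens X P * (w S (add_to P j {}) / (real (card X) + 1)
         + (\<Sum>B\<in>P. real (card B) / (real (card X) + 1) * w S (add_to P j B))))"
    by (rule key[OF iX(2) iX(1)])
  also have "\<dots> = (\<Sum>P\<in>partitions X. ewens X P * w (insert j S) P)"
  proof (rule sum.cong[OF refl])
    fix P assume P: "P \<in> partitions X"
    then have emb: "(S, P) \<in> embedded (N - {j})" using assms(4) by (simp add: embedded_def X_def)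
    have nul: "\<And>B. B \<in> P \<union> {{}} \<Longrightarrow> w S (add_to P j B) = w (insert j S) P"
      using assms(3) emb unfolding null_player_def by fastforce
    have sc: "(\<Sum>B\<in>P. real (card B)) = real (card X)"
      using sum_card_part iX(2) P by (simp add: partitions_def)
    have "(\<Sum>B\<in>P. real (card B) / (real (card X) + 1) * w S (add_to P j B))
        = (\<Sum>B\<in>P. real (card B)) / (real (card X) + 1) * w (insert j S) P"
      using nul by (simp add: sum_divide_distrib sum_distrib_right)
    then have "w S (add_to P j {}) / (real (card X) + 1)
         + (\<Sum>B\<in>P. real (card B) / (real (card X) + 1) * w S (add_to P j B)) = w (insert j S) P"
      using nul[of "{}"] sc by (simp add: field_simps)
    then show "ewens X P * (w S (add_to P j {}) / (real (card X) + 1)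
         + (\<Sum>B\<in>P. real (card B) / (real (card X) + 1) * w S (add_to P j B))) = ewens X P * w (insert j S) P"
      by simp
  qed
  also have "\<dots> = avg_game N w (insert j S)" by (simp add: avg_game_def NjS)
  finally show ?thesis by simp
qed

theorem proposition4:
  fixes N T :: "'a set" and w :: "'a tux" and j :: 'a
  assumes "finite N"
    and "tux_game N w"
    and "j \<in> N"
    and "T \<subseteq> N - {j}"
    and "null_player N w j"
  shows "\<forall>xs. distinct xs \<and> set xs = T \<longrightarrow> MPW (N - T) (restr_list N w xs) j = 0"
proof (intro allI impI)
  fix xs assume xs: "distinct xs \<and> set xs = T"
  show "MPW (N - T) (restr_list N w xs) j = 0"
    unfolding MPW_def shapley_def
  proof (rule sum.neutral, rule ballI)
    fix S assume S: "S \<in> Pow (N - T - {j})"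
    have a1: "avg_game (N - T) (restr_list N w xs) (insert j S) = avg_game N w (insert j S)"
      using avg_restr_list[of N xs "insert j S" w] xs assms S by auto
    have a2: "avg_game (N - T) (restr_list N w xs) S = avg_game N w S"
      using avg_restr_list[of N xs S w] xs assms S by auto
    have a3: "avg_game N w (insert j S) = avg_game N w S"
      using null_avg[OF assms(1,3,5)] S by auto
    show "fact (card S) * fact (card (N - T) - card S - 1) / fact (card (N - T)) *
          (avg_game (N - T) (restr_list N w xs) (insert j S) - avg_game (N - T) (restr_list N w xs) S) = 0"
      using a1 a2 a3 by simp
  qed
qed
end
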